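(* Let $L=\bigoplus_{i\in\mathbb{Z}/n\mathbb{Z}}L_i$ be a $(\mathbb{Z}/n\mathbb{Z})$-graded Lie algebra and let $T$ be a homogeneous ideal of $L$ that has only $e$ non-trivial components $T\cap L_i$. Then at most $e^2$ of the components $L_i$ of $L$ do not centralize $T$ (i.e. satisfy $[L_i,T]\neq 0$).
   Context: A $(\mathbb{Z}/n\mathbb{Z})$-graded Lie algebra is $L=\bigoplus_{i=0}^{n-1}L_i$ with $[L_i,L_j]\subseteq L_{i+j \bmod n}$. A subspace $T$ is homogeneous if $T=\bigoplus_i (T\cap L_i)$. *)

theory Defs
  imports Main "HOL.Vector_Spaces"
begin

definition lie_algebra :: "('k::field \<Rightarrow> 'v::ab_group_add \<Rightarrow> 'v) \<Rightarrow> ('v \<Rightarrow> 'v \<Rightarrow> 'v) \<Rightarrow> bool" where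
  "lie_algebra sc br \<longleftrightarrow>
     vector_space sc \<and>
     (\<forall>x y z. br (x + y) z = br x z + br y z) \<and>
     (\<forall>x y z. br x (y + z) = br x y + br x z) \<and>
     (\<forall>a x y. br (sc a x) y = sc a (br x y)) \<and>
     (\<forall>a x y. br x (sc a y) = sc a (br x y)) \<and>
     (\<forall>x. br x x = 0) \<and>
     (\<forall>x y z. br x (br y z) + br y (br z x) + br z (br x y) = 0)"

definition zn_graded :: "('k::field \<Rightarrow> 'v::ab_group_add \<Rightarrow> 'v) \<Rightarrow> ('v \<Rightarrow> 'v \<Rightarrow> 'v) \<Rightarrow> nat \<Rightarrow> (nat \<Rightarrow> 'v set) \<Rightarrow> bool" where
  "zn_graded sc br n Lc \<longleftrightarrow>
     0 < n \<and>
     (\<forall>i<n. module.subspace sc (Lc i)) \<and>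
     (\<forall>v. \<exists>!c. (\<forall>i<n. c i \<in> Lc i) \<and> (\<forall>i\<ge>n. c i = 0) \<and> v = (\<Sum>i<n. c i)) \<and>
     (\<forall>i<n. \<forall>j<n. \<forall>x\<in>Lc i. \<forall>y\<in>Lc j. br x y \<in> Lc ((i + j) mod n))"

definition lie_ideal :: "('k::field \<Rightarrow> 'v::ab_group_add \<Rightarrow> 'v) \<Rightarrow> ('v \<Rightarrow> 'v \<Rightarrow> 'v) \<Rightarrow> 'v set \<Rightarrow> bool" where
  "lie_ideal sc br T \<longleftrightarrow> module.subspace sc T \<and> (\<forall>x. \<forall>t\<in>T. br x t \<in> T)"

definition homogeneous :: "nat \<Rightarrow> (nat \<Rightarrow> 'v::ab_group_add set) \<Rightarrow> 'v set \<Rightarrow> bool" where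
  "homogeneous n Lc T \<longleftrightarrow>
     (\<forall>t\<in>T. \<exists>c. (\<forall>i<n. c i \<in> T \<inter> Lc i) \<and> t = (\<Sum>i<n. c i))"

end

theory Submission
  imports Defs
begin

theorem lemma7:
  fixes sc :: "'k::field \<Rightarrow> 'v::ab_group_add \<Rightarrow> 'v"
    and br :: "'v \<Rightarrow> 'v \<Rightarrow> 'v"
    and n :: nat and Lc :: "nat \<Rightarrow> 'v set" and T :: "'v set" and e :: nat
  assumes "lie_algebra sc br"
    and "zn_graded sc br n Lc"
    and "lie_ideal sc br T"
    and "homogeneous n Lc T"
    and "card {i. i < n \<and> T \<inter> Lc i \<noteq> {0}} = e"
  shows "card {i. i < n \<and> (\<exists>x\<in>Lc i. \<exists>t\<in>T. br x t \<noteq> 0)} \<le> e ^ 2"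
proof -
  define S where "S = {i. i < n \<and> T \<inter> Lc i \<noteq> {0}}"
  have addr: "\<And>x y z. br x (y + z) = br x y + br x z"
    using assms(1) unfolding lie_algebra_def by blast
  have br0: "\<And>x. br x 0 = 0"
  proof -
    fix x
    have "br x (0 + 0) = br x 0 + br x 0" by (rule addr)
    then show "br x 0 = 0" by simp
  qed
  have brsum: "\<And>x c (A::nat set). finite A \<Longrightarrow> br x (\<Sum>j\<in>A. c j) = (\<Sum>j\<in>A. br x (c j))"
  proof -
    fix x c and A :: "nat set"
    assume "finite A"
    then show "br x (\<Sum>j\<in>A. c j) = (\<Sum>j\<in>A. br x (c j))"
      by (induction A rule: finite_induct) (simp_all add: br0 addr)
  qed
  have grad: "\<forall>i<n. \<forall>j<n. \<forall>x\<in>Lc i. \<forall>y\<in>Lc j. br x y \<in> Lc ((i + j) mod n)"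
    and npos: "0 < n"
    using assms(2) unfolding zn_graded_def by blast+
  have ideal: "\<And>x t. t \<in> T \<Longrightarrow> br x t \<in> T"
    using assms(3) unfolding lie_ideal_def by blast
  have sub: "{i. i < n \<and> (\<exists>x\<in>Lc i. \<exists>t\<in>T. br x t \<noteq> 0)} \<subseteq> (\<lambda>(k,j). (k + n - j) mod n) ` (S \<times> S)"
  proof
    fix i assume "i \<in> {i. i < n \<and> (\<exists>x\<in>Lc i. \<exists>t\<in>T. br x t \<noteq> 0)}"
    then obtain x t where i: "i < n" and x: "x \<in> Lc i" and t: "t \<in> T" and nz: "br x t \<noteq> 0" by blast
    obtain c where c: "\<forall>j<n. c j \<in> T \<inter> Lc j" and tc: "t = (\<Sum>j<n. c j)"
      using assms(4) t unfolding homogeneous_def by blast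
    have "(\<Sum>j<n. br x (c j)) \<noteq> 0" using nz tc brsum by simp
    then obtain j where j: "j < n" and nzj: "br x (c j) \<noteq> 0"
      by (meson lessThan_iff sum.neutral)
    have "c j \<noteq> 0" using nzj br0 by auto
    then have jS: "j \<in> S" using c j unfolding S_def by blast
    have "br x (c j) \<in> T \<inter> Lc ((i + j) mod n)"
      using ideal c j grad i x by blast
    then have kS: "(i + j) mod n \<in> S" using nzj npos unfolding S_def by auto
    have "((i + j) mod n + n - j) mod n = i"
    proof -
      have "((i + j) mod n + n - j) mod n = ((i + j) mod n + (n - j)) mod n" using j by simp
      also have "\<dots> = (i + j + (n - j)) mod n" by (simp add: mod_add_left_eq)
      also have "i + j + (n - j) = i + n" using j by simp
      finally show ?thesis using i by simp
    qed
    then show "i \<in> (\<lambda>(k,j). (k + n - j) mod n) ` (S \<times> S)"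
      using jS kS by (metis (no_types, lifting) SigmaI case_prod_conv image_eqI)
  qed
  have fS: "finite S" unfolding S_def by simp
  have "card {i. i < n \<and> (\<exists>x\<in>Lc i. \<exists>t\<in>T. br x t \<noteq> 0)} \<le> card ((\<lambda>(k,j). (k + n - j) mod n) ` (S \<times> S))"
    using sub fS by (intro card_mono) auto
  also have "\<dots> \<le> card (S \<times> S)" by (rule card_image_le) (simp add: fS)
  also have "\<dots> = e ^ 2" using assms(5) unfolding S_def by (simp add: card_cartesian_product power2_eq_square)
  finally show ?thesis .
qed

end
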